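(* Let $n \ge 1$ and $d \ge 1$, and let $\Omega_1, \dots, \Omega_n \subseteq \mathbb{R}^d$ be nonempty, compact, convex sets. Let $r^*$ be the smallest radius of a closed Euclidean ball intersecting every $\Omega_i$, i.e. $r^* = \min_{\mathbf{x} \in \mathbb{R}^d} \max_{i \in [n]} \operatorname{dist}(\mathbf{x}, \Omega_i)$. Consider the zero-sum game \[ \min_{(\mathbf{x}, \mathbf{v}_1, \dots, \mathbf{v}_n) \in \mathcal{X} \times \mathcal{V}} \ \max_{\mathbf{y} \in \mathcal{Y}} \ f\big((\mathbf{x}, \mathbf{v}_1,\dots,\mathbf{v}_n), \mathbf{y}\big), \qquad f\big((\mathbf{x}, \mathbf{v}_1,\dots,\mathbf{v}_n), \mathbf{y}\big) := \sum_{i=1}^n \begin{pmatrix} \mathbf{x} - \mathbf{v}_i \\ 0 \end{pmatrix}^{\!\top} \begin{pmatrix} \mathbf{y}_i \\ s_i \end{pmatrix} = \sum_{i=1}^n (\mathbf{x} - \mathbf{v}_i)^\top \mathbf{y}_i, \] where $\mathbf{y} = ((\mathbf{y}_1, s_1), \dots, (\mathbf{y}_n, s_n))$. Then a Nash equilibrium $(\mathbf{x}^*, \mathbf{v}_1^*, \dots, \mathbf{v}_n^*, \mathbf{y}^* )$ of this game exists, and the value of the game is $r^*$. Moreover, for such a Nash equilibrium, the closed ball $B(\mathbf{x}^*, r^* )$ intersects every $\Omega_i$, and $\mathbf{v}_i^* \in B(\mathbf{x}^*, r^* ) \cap \Omega_i$ for every $i \in [n]$.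
   Context: $\|\cdot\|$ is the Euclidean norm, $B(\mathbf{x}, r)$ is the closed Euclidean ball of center $\mathbf{x}$ and radius $r$, and $[n] = \{1,\dots,n\}$. $\mathcal{X}$ is the convex hull of $\Omega_1 \cup \dots \cup \Omega_n$; $\mathcal{V} := \Omega_1 \times \dots \times \Omega_n$; and \[ \mathcal{Y} := \Big\{ ((\mathbf{y}_1, s_1), \dots, (\mathbf{y}_n, s_n)) \in (\mathbb{R}^{d} \times \mathbb{R})^n : \|\mathbf{y}_i\| \le s_i \ \forall i \in [n], \ \sum_{i=1}^n s_i = 1 \Big\}. \] For a zero-sum game $\min_{\mathbf{p} \in \mathcal{P}} \max_{\mathbf{q} \in \mathcal{Q}} f(\mathbf{p}, \mathbf{q})$, a pair $(\mathbf{p}^*, \mathbf{q}^* ) \in \mathcal{P}\times\mathcal{Q}$ is a Nash equilibrium iff $f(\mathbf{p}^*, \mathbf{q}^* ) \le f(\mathbf{p}, \mathbf{q}^* )$ for all $\mathbf{p} \in \mathcal{P}$ and $f(\mathbf{p}^*, \mathbf{q}^* ) \ge f(\mathbf{p}^*, \mathbf{q})$ for all $\mathbf{q} \in \mathcal{Q}$; the value of the game is then $f(\mathbf{p}^*, \mathbf{q}^* )$. *)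

theory Defs
  imports "HOL-Analysis.Analysis"
begin

definition nash_eq :: "'p set \<Rightarrow> 'q set \<Rightarrow> ('p \<Rightarrow> 'q \<Rightarrow> real) \<Rightarrow> 'p \<Rightarrow> 'q \<Rightarrow> bool" where
  "nash_eq P Q f p q \<longleftrightarrow> p \<in> P \<and> q \<in> Q \<and>
     (\<forall>p'\<in>P. f p q \<le> f p' q) \<and> (\<forall>q'\<in>Q. f p q \<ge> f p q')"

definition game_X :: "nat \<Rightarrow> (nat \<Rightarrow> 'a::euclidean_space set) \<Rightarrow> 'a set" where
  "game_X n \<Omega> = convex hull (\<Union>i\<in>{1..n}. \<Omega> i)"

definition game_V :: "nat \<Rightarrow> (nat \<Rightarrow> 'a::euclidean_space set) \<Rightarrow> (nat \<Rightarrow> 'a) set" where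
  "game_V n \<Omega> = PiE {1..n} \<Omega>"

definition game_Y :: "nat \<Rightarrow> (nat \<Rightarrow> 'a::euclidean_space \<times> real) set" where
  "game_Y n = {y \<in> PiE {1..n} (\<lambda>_. UNIV).
      (\<forall>i\<in>{1..n}. norm (fst (y i)) \<le> snd (y i)) \<and> (\<Sum>i=1..n. snd (y i)) = 1}"

definition game_f :: "nat \<Rightarrow> 'a::euclidean_space \<times> (nat \<Rightarrow> 'a) \<Rightarrow> (nat \<Rightarrow> 'a \<times> real) \<Rightarrow> real" where
  "game_f n p y = (\<Sum>i=1..n. inner (fst p - snd p i) (fst (y i)))"

definition r_star :: "nat \<Rightarrow> (nat \<Rightarrow> 'a::euclidean_space set) \<Rightarrow> real" where
  "r_star n \<Omega> = (INF x. Max ((\<lambda>i. infdist x (\<Omega> i)) ` {1..n}))"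

end

theory Submission
  imports Defs
begin

lemma conv_idx:
  fixes u :: "nat \<Rightarrow> 'a::real_vector"
  assumes "finite I" "p \<in> convex hull (u ` I)"
  shows "\<exists>s. (\<forall>i\<in>I. 0 \<le> s i) \<and> sum s I = 1 \<and> (\<Sum>i\<in>I. s i *\<^sub>R u i) = p"
proof -
  let ?T = "{p. \<exists>s. (\<forall>i\<in>I. 0 \<le> s i) \<and> sum s I = 1 \<and> (\<Sum>i\<in>I. s i *\<^sub>R u i) = p}"
  have "u ` I \<subseteq> ?T"
  proof
    fix z assume "z \<in> u ` I"
    then obtain j where j: "j \<in> I" "z = u j" by auto
    show "z \<in> ?T"
      by (rule CollectI, rule exI[of _ "\<lambda>i. if i = j then 1 else 0"])
         (use j assms(1) in \<open>auto simp: if_distrib[of "\<lambda>c. c *\<^sub>R _"] cong: if_cong\<close>)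
  qed
  moreover have "convex ?T"
  proof (rule convexI)
    fix x y :: 'a and a b :: real
    assume x: "x \<in> ?T" and y: "y \<in> ?T" and ab: "0 \<le> a" "0 \<le> b" "a + b = 1"
    from x obtain s where s: "\<forall>i\<in>I. 0 \<le> s i" "sum s I = 1" "(\<Sum>i\<in>I. s i *\<^sub>R u i) = x" by auto
    from y obtain s' where s': "\<forall>i\<in>I. 0 \<le> s' i" "sum s' I = 1" "(\<Sum>i\<in>I. s' i *\<^sub>R u i) = y" by auto
    show "a *\<^sub>R x + b *\<^sub>R y \<in> ?T"
    proof (rule CollectI, rule exI[of _ "\<lambda>i. a * s i + b * s' i"], intro conjI)
      show "\<forall>i\<in>I. 0 \<le> a * s i + b * s' i" using s s' ab by auto
      show "(\<Sum>i\<in>I. a * s i + b * s' i) = 1"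
        using s s' ab by (simp add: sum.distrib sum_distrib_left[symmetric])
      show "(\<Sum>i\<in>I. (a * s i + b * s' i) *\<^sub>R u i) = a *\<^sub>R x + b *\<^sub>R y"
        unfolding s(3)[symmetric] s'(3)[symmetric] by (simp add: scaleR_add_left sum.distrib scaleR_sum_right)
    qed
  qed
  ultimately have "convex hull (u ` I) \<subseteq> ?T" by (rule hull_minimal)
  then show ?thesis using assms(2) by blast
qed

lemma f_le:
  assumes "q \<in> game_Y n" "\<forall>i\<in>{1..n}. norm (x - v i) \<le> M"
  shows "game_f n (x, v) q \<le> M"
proof -
  have q: "\<forall>i\<in>{1..n}. norm (fst (q i)) \<le> snd (q i)" "(\<Sum>i=1..n. snd (q i)) = 1"
    using assms(1) unfolding game_Y_def by auto
  have "game_f n (x, v) q = (\<Sum>i=1..n. inner (x - v i) (fst (q i)))" by (simp add: game_f_def)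
  also have "\<dots> \<le> (\<Sum>i=1..n. M * snd (q i))"
  proof (rule sum_mono)
    fix i assume i: "i \<in> {1..n}"
    have "inner (x - v i) (fst (q i)) \<le> norm (x - v i) * norm (fst (q i))"
      by (rule norm_cauchy_schwarz)
    also have "\<dots> \<le> M * snd (q i)"
      using q(1) assms(2) i by (intro mult_mono) (auto intro: order_trans[OF norm_ge_zero])
    finally show "inner (x - v i) (fst (q i)) \<le> M * snd (q i)" .
  qed
  also have "\<dots> = M" using q(2) by (simp add: sum_distrib_left[symmetric])
  finally show ?thesis .
qed

lemma inner_sgn_self: "inner w (sgn w) = norm (w::'a::real_inner)"
  by (cases "w = 0") (simp_all add: sgn_div_norm power2_norm_eq_inner[symmetric] power2_eq_square)

lemma f_attain:
  assumes "j \<in> {1..n}"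
  shows "\<exists>q\<in>game_Y n. game_f n (x, v) q = norm (x - v j)"
proof -
  define q where "q = (\<lambda>i. if i \<in> {1..n} then (if i = j then (sgn (x - v j), 1::real) else (0, 0)) else undefined)"
  have "q \<in> game_Y n"
  proof -
    have "(\<Sum>i=1..n. snd (q i)) = (\<Sum>i=1..n. if i = j then 1 else 0)"
      unfolding q_def by (intro sum.cong) auto
    also have "\<dots> = 1" using assms by simp
    finally have "(\<Sum>i=1..n. snd (q i)) = 1" .
    moreover have "q \<in> PiE {1..n} (\<lambda>_. UNIV)" unfolding q_def by (auto simp: PiE_iff extensional_def)
    moreover have "\<forall>i\<in>{1..n}. norm (fst (q i)) \<le> snd (q i)" unfolding q_def by (auto simp: norm_sgn)
    ultimately show ?thesis unfolding game_Y_def by blast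
  qed
  moreover have "game_f n (x, v) q = norm (x - v j)"
  proof -
    have "game_f n (x, v) q = (\<Sum>i=1..n. if i = j then inner (x - v j) (sgn (x - v j)) else 0)"
      unfolding game_f_def q_def by (intro sum.cong) auto
    also have "\<dots> = inner (x - v j) (sgn (x - v j))" using assms by simp
    also have "\<dots> = norm (x - v j)"
      by (rule inner_sgn_self)
    finally show ?thesis .
  qed
  ultimately show ?thesis by blast
qed

lemma existence:
  fixes n :: nat and \<Omega> :: "nat \<Rightarrow> 'a::euclidean_space set"
  assumes n1: "n \<ge> 1"
    and ne: "\<And>i. i \<in> {1..n} \<Longrightarrow> \<Omega> i \<noteq> {}"
    and cp: "\<And>i. i \<in> {1..n} \<Longrightarrow> compact (\<Omega> i)"
    and cv: "\<And>i. i \<in> {1..n} \<Longrightarrow> convex (\<Omega> i)"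
  shows "\<exists>x0 v0 q. x0 \<in> game_X n \<Omega> \<and> v0 \<in> game_V n \<Omega> \<and> q \<in> game_Y n \<and>
     (\<forall>x\<in>game_X n \<Omega>. \<forall>v\<in>game_V n \<Omega>. game_f n (x0, v0) q \<le> game_f n (x, v) q) \<and>
     game_f n (x0, v0) q = r_star n \<Omega> \<and> (\<forall>i\<in>{1..n}. norm (x0 - v0 i) \<le> r_star n \<Omega>)"
proof -
  define g where "g x = Max ((\<lambda>i. infdist x (\<Omega> i)) ` {1..n})" for x
  have fin: "finite ((\<lambda>i. infdist x (\<Omega> i)) ` {1..n})" for x by simp
  have nem: "((\<lambda>i. infdist x (\<Omega> i)) ` {1..n}) \<noteq> {}" for x using n1 by auto
  have g_ge: "infdist x (\<Omega> i) \<le> g x" if "i \<in> {1..n}" for x i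
    unfolding g_def using that fin by (intro Max_ge) auto
  have g_lt: "g x < c \<longleftrightarrow> (\<forall>i\<in>{1..n}. infdist x (\<Omega> i) < c)" for x c
    unfolding g_def using Max_less_iff[OF fin nem] by auto
  have g_le: "g x \<le> c \<longleftrightarrow> (\<forall>i\<in>{1..n}. infdist x (\<Omega> i) \<le> c)" for x c
    unfolding g_def using Max_le_iff[OF fin nem] by auto
  have g_lip: "g x \<le> g y + dist x y" for x y
    unfolding g_le by (meson g_ge infdist_triangle add_right_mono order_trans)
  have g_cont: "continuous_on UNIV g"
    unfolding continuous_on_iff
  proof (intro ballI allI impI)
    fix x :: 'a and e :: real assume e: "e > 0"
    have "dist (g x') (g x) < e" if "dist x' x < e" for x'
      using g_lip[of x' x] g_lip[of x x'] that by (simp add: dist_real_def dist_commute abs_less_iff)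
    then show "\<exists>d>0. \<forall>x'\<in>UNIV. dist x' x < d \<longrightarrow> dist (g x') (g x) < e"
      using e by blast
  qed
  have Xdef: "game_X n \<Omega> = convex hull (\<Union>i\<in>{1..n}. \<Omega> i)" by (simp add: game_X_def)
  have Xc: "compact (game_X n \<Omega>)" unfolding Xdef
    by (intro compact_convex_hull compact_UN) (auto intro: cp)
  have Xcv: "convex (game_X n \<Omega>)" unfolding Xdef by simp
  have Xcl: "closed (game_X n \<Omega>)" using Xc compact_imp_closed by blast
  have OX: "\<Omega> i \<subseteq> game_X n \<Omega>" if "i \<in> {1..n}" for i
    unfolding Xdef using that hull_subset by fastforce
  have Xne: "game_X n \<Omega> \<noteq> {}" using OX[of 1] ne[of 1] n1 by auto
  obtain x0 where x0X: "x0 \<in> game_X n \<Omega>" and x0min: "\<forall>y\<in>game_X n \<Omega>. g x0 \<le> g y"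
    using continuous_attains_inf[OF Xc Xne continuous_on_subset[OF g_cont]] by blast
  have glob: "g x0 \<le> g x" for x
  proof -
    define p where "p = closest_point (game_X n \<Omega>) x"
    have pX: "p \<in> game_X n \<Omega>" unfolding p_def using closest_point_in_set[OF Xcl Xne] .
    have pz: "dist p z \<le> dist x z" if "z \<in> game_X n \<Omega>" for z
    proof -
      have d: "inner (x - p) (z - p) \<le> 0" unfolding p_def by (rule closest_point_dot[OF Xcv Xcl that])
      have "inner (z - p) (z - p) \<le> inner ((x - p) - (z - p)) ((x - p) - (z - p))"
        using d inner_ge_zero[of "x - p"] by (simp add: inner_diff_left inner_diff_right inner_commute)
      then have "norm (z - p) \<le> norm ((x - p) - (z - p))" by (simp add: norm_le)
      then show ?thesis by (simp add: dist_norm norm_minus_commute)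
    qed
    have "g p \<le> g x" unfolding g_le
    proof
      fix i assume i: "i \<in> {1..n}"
      obtain z where z: "z \<in> \<Omega> i" "infdist x (\<Omega> i) = dist x z"
        using infdist_attains_inf[OF compact_imp_closed[OF cp[OF i]] ne[OF i]] by blast
      have "infdist p (\<Omega> i) \<le> dist p z" by (rule infdist_le[OF z(1)])
      also have "\<dots> \<le> dist x z" using pz OX[OF i] z(1) by blast
      also have "\<dots> \<le> g x" using z(2) g_ge[OF i, of x] by simp
      finally show "infdist p (\<Omega> i) \<le> g x" .
    qed
    then show ?thesis using x0min pX by fastforce
  qed
  have rs: "r_star n \<Omega> = g x0"
    unfolding r_star_def g_def[symmetric] by (rule cInf_eq_minimum) (auto intro: glob)
  define r where "r = g x0"
  have r0: "r \<ge> 0" unfolding r_def using g_ge[of 1 x0] n1 infdist_nonneg[of x0] by (meson atLeastAtMost_iff le_refl order_trans)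
  define P where "P i = closest_point (\<Omega> i) x0" for i
  have P_in: "P i \<in> \<Omega> i" if "i \<in> {1..n}" for i
    unfolding P_def using closest_point_in_set[OF compact_imp_closed[OF cp[OF that]] ne[OF that]] .
  have P_dist: "dist x0 (P i) = infdist x0 (\<Omega> i)" if i: "i \<in> {1..n}" for i
  proof -
    obtain z where z: "z \<in> \<Omega> i" "infdist x0 (\<Omega> i) = dist x0 z"
      using infdist_attains_inf[OF compact_imp_closed[OF cp[OF i]] ne[OF i]] by blast
    have "dist x0 (P i) \<le> dist x0 z" unfolding P_def by (rule closest_point_le[OF compact_imp_closed[OF cp[OF i]] z(1)])
    moreover have "infdist x0 (\<Omega> i) \<le> dist x0 (P i)" by (rule infdist_le[OF P_in[OF i]])
    ultimately show ?thesis using z(2) by simp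
  qed
  have P_dot: "inner (x0 - P i) (w - P i) \<le> 0" if i: "i \<in> {1..n}" and w: "w \<in> \<Omega> i" for i w
    unfolding P_def by (rule closest_point_dot[OF cv[OF i] compact_imp_closed[OF cp[OF i]] w])
  define v0 where "v0 = (\<lambda>i. if i \<in> {1..n} then P i else undefined)"
  have v0V: "v0 \<in> game_V n \<Omega>" unfolding game_V_def v0_def using P_in by (auto simp: PiE_iff extensional_def)
  have v0b: "\<forall>i\<in>{1..n}. norm (x0 - v0 i) \<le> r_star n \<Omega>"
    using P_dist g_ge[of _ x0] unfolding rs v0_def by (simp add: dist_norm)
  show ?thesis
  proof (cases "r = 0")
    case True
    define q :: "nat \<Rightarrow> 'a \<times> real" where "q = (\<lambda>i. if i \<in> {1..n} then (0, if i = 1 then 1 else 0) else undefined)"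
    have "(\<Sum>i=1..n. snd (q i)) = (\<Sum>i=1..n. if i = 1 then 1 else 0)"
      unfolding q_def by (intro sum.cong) auto
    also have "\<dots> = 1" using n1 by simp
    finally have "(\<Sum>i=1..n. snd (q i)) = 1" .
    moreover have "q \<in> PiE {1..n} (\<lambda>_. UNIV)" unfolding q_def by (auto simp: PiE_iff extensional_def)
    moreover have "\<forall>i\<in>{1..n}. norm (fst (q i)) \<le> snd (q i)" unfolding q_def by auto
    ultimately have qY: "q \<in> game_Y n" unfolding game_Y_def by blast
    have f0: "game_f n p q = 0" for p unfolding game_f_def q_def by (intro sum.neutral) auto
    show ?thesis
      by (rule exI[of _ x0], rule exI[of _ v0], rule exI[of _ q])
         (use x0X v0V qY v0b f0 True rs r_def in auto)
  next
    case False
    then have rpos: "r > 0" using r0 by simp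
    define I where "I = {i\<in>{1..n}. infdist x0 (\<Omega> i) = r}"
    have finI: "finite I" unfolding I_def by simp
    have I_sub: "I \<subseteq> {1..n}" unfolding I_def by auto
    have Ine: "I \<noteq> {}"
    proof -
      have "r \<in> ((\<lambda>i. infdist x0 (\<Omega> i)) ` {1..n})" unfolding r_def g_def using Max_in[OF fin nem] .
      then show ?thesis unfolding I_def by auto
    qed
    define u where "u i = (1/r) *\<^sub>R (x0 - P i)" for i
    have xu: "x0 - P i = r *\<^sub>R u i" for i unfolding u_def using rpos by simp
    have nu: "norm (u i) = 1" if "i \<in> I" for i
      using that P_dist[of i] rpos unfolding u_def I_def by (auto simp: dist_norm)
    have uu: "inner (u i) (u i) = 1" if "i \<in> I" for i
      using nu[OF that] by (simp add: power2_norm_eq_inner[symmetric])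
    have zero_in: "0 \<in> convex hull (u ` I)"
    proof (rule ccontr)
      assume nz: "0 \<notin> convex hull (u ` I)"
      have "closed (convex hull (u ` I))"
        using finite_imp_compact_convex_hull[of "u ` I"] finI compact_imp_closed by blast
      then obtain a b where ab: "inner a 0 < b" "\<forall>z\<in>convex hull (u ` I). b < inner a z"
        using separating_hyperplane_closed_point[OF convex_convex_hull _ nz] by blast
      have b0: "b > 0" using ab(1) by simp
      have au: "b < inner a (u i)" if "i \<in> I" for i
        using ab(2) hull_subset[of "u ` I" convex] that by blast
      have a0: "a \<noteq> 0" using au Ine b0 by fastforce
      have na: "norm a > 0" using a0 by simp
      have ev: "\<forall>i\<in>{1..n}. eventually (\<lambda>t. dist (x0 - t *\<^sub>R a) (P i) < r) (at_right (0::real))"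
      proof
        fix i assume i: "i \<in> {1..n}"
        show "eventually (\<lambda>t. dist (x0 - t *\<^sub>R a) (P i) < r) (at_right (0::real))"
        proof (cases "i \<in> I")
          case True
          show ?thesis unfolding eventually_at_right_field
          proof (intro exI[of _ "r * b / (norm a)^2"] conjI allI impI)
            show "0 < r * b / (norm a)^2" using rpos b0 na by simp
            fix t :: real assume t0: "0 < t" and tb: "t < r * b / (norm a)^2"
            have tb': "t * (norm a)^2 < r * b" using tb na by (simp add: field_simps)
            have ua: "b < inner (u i) a" using au[OF True] by (simp add: inner_commute)
            have "r * b < 2 * r * inner (u i) a" using rpos b0 ua by (simp add: mult_strict_left_mono[OF _ rpos, of b])
            then have key: "t * (t * (norm a)^2) < t * (2 * r * inner (u i) a)"
              using tb' t0 by (intro mult_strict_left_mono) auto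
            have "(dist (x0 - t *\<^sub>R a) (P i))^2 = inner (r *\<^sub>R u i - t *\<^sub>R a) (r *\<^sub>R u i - t *\<^sub>R a)"
              by (simp add: dist_norm power2_norm_eq_inner[symmetric] xu[symmetric] algebra_simps)
            also have "\<dots> = r^2 * inner (u i) (u i) - 2 * r * t * inner (u i) a + t^2 * inner a a"
              by (simp add: inner_diff_left inner_diff_right inner_commute algebra_simps power2_eq_square)
            also have "\<dots> = r^2 - t * (2 * r * inner (u i) a) + t * (t * (norm a)^2)"
              using uu[OF True] by (simp add: power2_norm_eq_inner[symmetric] power2_eq_square algebra_simps)
            also have "\<dots> < r^2" using key by simp
            finally show "dist (x0 - t *\<^sub>R a) (P i) < r"
              using rpos by (meson power_less_imp_less_base less_imp_le)
          qed
        next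
          case False
          have dlt: "infdist x0 (\<Omega> i) < r"
            using False g_ge[OF i, of x0] unfolding I_def r_def using i by auto
          show ?thesis unfolding eventually_at_right_field
          proof (intro exI[of _ "(r - infdist x0 (\<Omega> i)) / norm a"] conjI allI impI)
            show "0 < (r - infdist x0 (\<Omega> i)) / norm a" using dlt na by simp
            fix t :: real assume t0: "0 < t" and tb: "t < (r - infdist x0 (\<Omega> i)) / norm a"
            have tb': "t * norm a < r - infdist x0 (\<Omega> i)" using tb na by (simp add: field_simps)
            have "dist (x0 - t *\<^sub>R a) (P i) \<le> dist (x0 - t *\<^sub>R a) x0 + dist x0 (P i)"
              by (rule dist_triangle)
            also have "\<dots> = t * norm a + infdist x0 (\<Omega> i)"
              using P_dist[OF i] t0 by (simp add: dist_norm)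
            finally show "dist (x0 - t *\<^sub>R a) (P i) < r" using tb' by simp
          qed
        qed
      qed
      have "eventually (\<lambda>t. \<forall>i\<in>{1..n}. dist (x0 - t *\<^sub>R a) (P i) < r) (at_right (0::real))"
        by (rule eventually_ball_finite[OF _ ev]) simp
      then obtain bb :: real where bb: "bb > 0" "\<forall>t>0. t < bb \<longrightarrow> (\<forall>i\<in>{1..n}. dist (x0 - t *\<^sub>R a) (P i) < r)"
        unfolding eventually_at_right_field by blast
      define t where "t = bb / 2"
      have "\<forall>i\<in>{1..n}. dist (x0 - t *\<^sub>R a) (P i) < r" using bb unfolding t_def by simp
      then have "g (x0 - t *\<^sub>R a) < r" unfolding g_lt
        using infdist_le[OF P_in] le_less_trans by blast
      then show False using glob[of "x0 - t *\<^sub>R a"] unfolding r_def by simp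
    qed
    obtain s where s: "\<forall>i\<in>I. 0 \<le> s i" "sum s I = 1" "(\<Sum>i\<in>I. s i *\<^sub>R u i) = 0"
      using conv_idx[OF finI zero_in] by blast
    define s' where "s' i = (if i \<in> I then s i else 0)" for i
    define q where "q = (\<lambda>i. if i \<in> {1..n} then (s' i *\<^sub>R u i, s' i) else undefined)"
    have "(\<Sum>i=1..n. snd (q i)) = (\<Sum>i=1..n. if i \<in> I then s i else 0)"
      unfolding q_def s'_def by (intro sum.cong) auto
    also have "\<dots> = sum s ({1..n} \<inter> I)" by (simp add: sum.inter_restrict)
    also have "{1..n} \<inter> I = I" using I_sub by auto
    finally have "(\<Sum>i=1..n. snd (q i)) = 1" using s(2) by simp
    moreover have "q \<in> PiE {1..n} (\<lambda>_. UNIV)" unfolding q_def by (auto simp: PiE_iff extensional_def)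
    moreover have "\<forall>i\<in>{1..n}. norm (fst (q i)) \<le> snd (q i)"
      unfolding q_def s'_def using nu s(1) by auto
    ultimately have qY: "q \<in> game_Y n" unfolding game_Y_def by blast
    have fq: "game_f n (x, v) q = (\<Sum>i\<in>I. s i * inner (x - v i) (u i))" for x v
    proof -
      have "game_f n (x, v) q = (\<Sum>i=1..n. if i \<in> I then s i * inner (x - v i) (u i) else 0)"
        unfolding game_f_def q_def s'_def by (intro sum.cong) auto
      also have "\<dots> = (\<Sum>i\<in>{1..n} \<inter> I. s i * inner (x - v i) (u i))" by (simp add: sum.inter_restrict)
      also have "{1..n} \<inter> I = I" using I_sub by auto
      finally show ?thesis .
    qed
    have fval: "game_f n (x0, v0) q = r"
    proof -
      have "game_f n (x0, v0) q = (\<Sum>i\<in>I. s i * r)"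
        unfolding fq
      proof (intro sum.cong refl)
        fix i assume i: "i \<in> I"
        have "v0 i = P i" using i I_sub unfolding v0_def by auto
        then show "s i * inner (x0 - v0 i) (u i) = s i * r" using uu[OF i] by (simp add: xu)
      qed
      also have "\<dots> = r" using s(2) by (simp add: sum_distrib_right[symmetric])
      finally show ?thesis .
    qed
    have fopt: "game_f n (x0, v0) q \<le> game_f n (x, v) q" if vV: "v \<in> game_V n \<Omega>" for x v
    proof -
      have vin: "v i \<in> \<Omega> i" if "i \<in> {1..n}" for i using vV that unfolding game_V_def by (auto simp: PiE_iff)
      have "game_f n (x, v) q = (\<Sum>i\<in>I. s i * inner (x0 - v0 i) (u i) + s i * inner (P i - v i) (u i) + inner (x - x0) (s i *\<^sub>R u i))"
        unfolding fq
      proof (intro sum.cong refl)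
        fix i assume i: "i \<in> I"
        have "v0 i = P i" using i I_sub unfolding v0_def by auto
        then show "s i * inner (x - v i) (u i) = s i * inner (x0 - v0 i) (u i) + s i * inner (P i - v i) (u i) + inner (x - x0) (s i *\<^sub>R u i)"
          by (simp add: inner_diff_left algebra_simps)
      qed
      also have "\<dots> = game_f n (x0, v0) q + (\<Sum>i\<in>I. s i * inner (P i - v i) (u i)) + inner (x - x0) (\<Sum>i\<in>I. s i *\<^sub>R u i)"
        unfolding fq by (simp add: sum.distrib inner_sum_right)
      also have "\<dots> = game_f n (x0, v0) q + (\<Sum>i\<in>I. s i * inner (P i - v i) (u i))" using s(3) by simp
      also have "\<dots> \<ge> game_f n (x0, v0) q"
      proof -
        have "0 \<le> s i * inner (P i - v i) (u i)" if i: "i \<in> I" for i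
        proof -
          have iI: "i \<in> {1..n}" using i I_sub by auto
          have "inner (x0 - P i) (v i - P i) \<le> 0" by (rule P_dot[OF iI vin[OF iI]])
          then have "0 \<le> inner (P i - v i) (x0 - P i)"
            by (simp add: inner_diff_left inner_diff_right inner_commute)
          then have "0 \<le> inner (P i - v i) (u i)" using rpos unfolding u_def by simp
          then show ?thesis using s(1) i by simp
        qed
        then show ?thesis by (simp add: sum_nonneg)
      qed
      finally show ?thesis .
    qed
    show ?thesis
      by (rule exI[of _ x0], rule exI[of _ v0], rule exI[of _ q])
         (use x0X v0V qY v0b fopt fval rs r_def in auto)
  qed
qed
theorem theorem1:
  fixes n :: nat and \<Omega> :: "nat \<Rightarrow> 'a::euclidean_space set"
  assumes "n \<ge> 1"
    and "\<And>i. i \<in> {1..n} \<Longrightarrow> \<Omega> i \<noteq> {}"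
    and "\<And>i. i \<in> {1..n} \<Longrightarrow> compact (\<Omega> i)"
    and "\<And>i. i \<in> {1..n} \<Longrightarrow> convex (\<Omega> i)"
  shows "(\<exists>p q. nash_eq (game_X n \<Omega> \<times> game_V n \<Omega>) (game_Y n) (game_f n) p q)
    \<and> (\<forall>x v q. nash_eq (game_X n \<Omega> \<times> game_V n \<Omega>) (game_Y n) (game_f n) (x, v) q \<longrightarrow>
         game_f n (x, v) q = r_star n \<Omega>
       \<and> (\<forall>i\<in>{1..n}. cball x (r_star n \<Omega>) \<inter> \<Omega> i \<noteq> {})
       \<and> (\<forall>i\<in>{1..n}. v i \<in> cball x (r_star n \<Omega>) \<inter> \<Omega> i))"
proof -
  obtain x0 v0 q0 where x0X: "x0 \<in> game_X n \<Omega>" and v0V: "v0 \<in> game_V n \<Omega>" and q0Y: "q0 \<in> game_Y n"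
    and opt: "\<forall>x\<in>game_X n \<Omega>. \<forall>v\<in>game_V n \<Omega>. game_f n (x0, v0) q0 \<le> game_f n (x, v) q0"
    and val: "game_f n (x0, v0) q0 = r_star n \<Omega>" and v0b: "\<forall>i\<in>{1..n}. norm (x0 - v0 i) \<le> r_star n \<Omega>"
    using existence[of n \<Omega>, OF assms] by blast
  have up0: "game_f n (x0, v0) q \<le> r_star n \<Omega>" if "q \<in> game_Y n" for q
    by (rule f_le[OF that v0b])
  have part1: "nash_eq (game_X n \<Omega> \<times> game_V n \<Omega>) (game_Y n) (game_f n) (x0, v0) q0"
    unfolding nash_eq_def using x0X v0V q0Y opt up0 val by auto
  have part2: "game_f n (x, v) q = r_star n \<Omega>
       \<and> (\<forall>i\<in>{1..n}. cball x (r_star n \<Omega>) \<inter> \<Omega> i \<noteq> {})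
       \<and> (\<forall>i\<in>{1..n}. v i \<in> cball x (r_star n \<Omega>) \<inter> \<Omega> i)"
    if ne: "nash_eq (game_X n \<Omega> \<times> game_V n \<Omega>) (game_Y n) (game_f n) (x, v) q" for x v q
  proof -
    have vV: "v \<in> game_V n \<Omega>" and qY: "q \<in> game_Y n"
      and min: "\<And>x' v'. x' \<in> game_X n \<Omega> \<Longrightarrow> v' \<in> game_V n \<Omega> \<Longrightarrow> game_f n (x, v) q \<le> game_f n (x', v') q"
      and max: "\<And>q'. q' \<in> game_Y n \<Longrightarrow> game_f n (x, v) q' \<le> game_f n (x, v) q"
      using ne unfolding nash_eq_def by auto
    have vin: "v i \<in> \<Omega> i" if "i \<in> {1..n}" for i using vV that unfolding game_V_def by (auto simp: PiE_iff)
    have hj: "norm (x - v j) \<le> game_f n (x, v) q" if j: "j \<in> {1..n}" for j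
      using f_attain[OF j, of x v] max by fastforce
    have u1: "game_f n (x, v) q \<le> r_star n \<Omega>"
      using min[OF x0X v0V] f_le[OF qY v0b] by linarith
    have fin: "finite ((\<lambda>i. infdist x (\<Omega> i)) ` {1..n})" by simp
    have nem: "((\<lambda>i. infdist x (\<Omega> i)) ` {1..n}) \<noteq> {}" using assms(1) by auto
    have bdd: "bdd_below (range (\<lambda>y. Max ((\<lambda>i. infdist y (\<Omega> i)) ` {1..n})))"
    proof (rule bdd_belowI[of _ 0])
      fix z assume "z \<in> range (\<lambda>y. Max ((\<lambda>i. infdist y (\<Omega> i)) ` {1..n}))"
      then obtain y where y: "z = Max ((\<lambda>i. infdist y (\<Omega> i)) ` {1..n})" by auto
      have "infdist y (\<Omega> 1) \<le> z" unfolding y using assms(1) by (intro Max_ge) auto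
      then show "0 \<le> z" using infdist_nonneg[of y "\<Omega> 1"] by linarith
    qed
    have "r_star n \<Omega> \<le> Max ((\<lambda>i. infdist x (\<Omega> i)) ` {1..n})"
      unfolding r_star_def by (rule cINF_lower[OF bdd]) simp
    also have "\<dots> \<le> game_f n (x, v) q"
      unfolding Max_le_iff[OF fin nem]
    proof (intro ballI, elim imageE)
      fix a i assume i: "i \<in> {1..n}" and a: "a = infdist x (\<Omega> i)"
      have "infdist x (\<Omega> i) \<le> dist x (v i)" by (rule infdist_le[OF vin[OF i]])
      then show "a \<le> game_f n (x, v) q" using hj[OF i] a by (simp add: dist_norm)
    qed
    finally have l1: "r_star n \<Omega> \<le> game_f n (x, v) q" .
    have eq: "game_f n (x, v) q = r_star n \<Omega>" using l1 u1 by simp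
    have vc: "\<forall>i\<in>{1..n}. v i \<in> cball x (r_star n \<Omega>) \<inter> \<Omega> i"
      using vin hj eq by (auto simp: dist_norm)
    then show ?thesis using eq by blast
  qed
  show ?thesis using part1 part2 by blast
qed

end
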